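(* Let $S$ and $T$ be linear relations between two vector spaces $\mathcal{H}$ and $\mathcal{K}$. The following three statements are equivalent: (i) $S=T$; (ii) $\ker S=\ker T$ and $\operatorname{ran} S+\operatorname{ran} T\subseteq \operatorname{ran}(S\cap T)$; (iii) $\operatorname{ran} S=\operatorname{ran} T$ and $\ker(S\vee T)\subseteq \ker(S\cap T)$.
   Context: A linear relation between $\mathcal{H}$ and $\mathcal{K}$ is a linear subspace of $\mathcal{H}\times\mathcal{K}$. For such $R$: $\operatorname{ran} R=\{k:(h,k)\in R \text{ for some } h\}$, $\ker R=\{h:(h,0)\in R\}$. $S\cap T$ is the intersection of the subspaces $S,T$, and $S\vee T$ is the linear span of $S\cup T$. *)

theory Defs
  imports Complex_Main "HOL-Library.Product_Plus"
begin

definition prod_scale :: "('f \<Rightarrow> 'h \<Rightarrow> 'h) \<Rightarrow> ('f \<Rightarrow> 'k \<Rightarrow> 'k) \<Rightarrow> 'f \<Rightarrow> 'h \<times> 'k \<Rightarrow> 'h \<times> 'k"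
  where "prod_scale sH sK c p = (sH c (fst p), sK c (snd p))"

definition linear_relation ::
  "('f::field \<Rightarrow> 'h::ab_group_add \<Rightarrow> 'h) \<Rightarrow> ('f \<Rightarrow> 'k::ab_group_add \<Rightarrow> 'k) \<Rightarrow> ('h \<times> 'k) set \<Rightarrow> bool"
  where "linear_relation sH sK R \<longleftrightarrow> module.subspace (prod_scale sH sK) R"

definition lr_ran :: "('h \<times> 'k) set \<Rightarrow> 'k set"
  where "lr_ran R = {k. \<exists>h. (h, k) \<in> R}"

definition lr_ker :: "('h \<times> 'k::zero) set \<Rightarrow> 'h set"
  where "lr_ker R = {h. (h, 0) \<in> R}"

definition lr_join ::
  "('f::field \<Rightarrow> 'h::ab_group_add \<Rightarrow> 'h) \<Rightarrow> ('f \<Rightarrow> 'k::ab_group_add \<Rightarrow> 'k) \<Rightarrow> ('h \<times> 'k) set \<Rightarrow> ('h \<times> 'k) set \<Rightarrow> ('h \<times> 'k) set"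
  where "lr_join sH sK S T = module.span (prod_scale sH sK) (S \<union> T)"

definition set_sum :: "'a::plus set \<Rightarrow> 'a set \<Rightarrow> 'a set"
  where "set_sum A B = {a + b | a b. a \<in> A \<and> b \<in> B}"

end

theory Submission
  imports Defs
begin

lemma prod_module:
  assumes "vector_space sH" and "vector_space sK"
  shows "module (prod_scale sH sK)"
proof -
  interpret H: vector_space sH by fact
  interpret K: vector_space sK by fact
  show ?thesis
    by unfold_locales
      (auto simp: prod_scale_def H.scale_right_distrib K.scale_right_distrib
         H.scale_left_distrib K.scale_left_distrib)
qed

lemma dir2:
  fixes s :: "'f::field \<Rightarrow> ('h::ab_group_add \<times> 'k::ab_group_add) \<Rightarrow> ('h \<times> 'k)"
  assumes m: "module s" and sA: "module.subspace s A" and sB: "module.subspace s B"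
    and k: "lr_ker A = lr_ker B"
    and r: "set_sum (lr_ran A) (lr_ran B) \<subseteq> lr_ran (A \<inter> B)"
  shows "A \<subseteq> B"
proof
  interpret P: module s by fact
  fix p assume p: "p \<in> A"
  obtain h k where hk: "p = (h, k)" by force
  have "(0::'h\<times>'k) \<in> B" using P.subspace_0[OF sB] .
  hence "(0::'k) \<in> lr_ran B" by (auto simp: lr_ran_def zero_prod_def)
  moreover have "k \<in> lr_ran A" using p hk by (auto simp: lr_ran_def)
  ultimately have "k + 0 \<in> set_sum (lr_ran A) (lr_ran B)"
    unfolding set_sum_def by blast
  then obtain h' where h': "(h', k) \<in> A" "(h', k) \<in> B" using r by (auto simp: lr_ran_def)
  have "(h - h', 0) \<in> A" using P.subspace_diff[OF sA, of "(h,k)" "(h',k)"] p hk h' by simp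
  hence "h - h' \<in> lr_ker A" by (simp add: lr_ker_def)
  hence "h - h' \<in> lr_ker B" using k by simp
  hence "(h - h', 0) \<in> B" by (simp add: lr_ker_def)
  hence "(h - h', 0) + (h', k) \<in> B" using P.subspace_add[OF sB, of "(h - h', 0)" "(h',k)"] h' by blast
  thus "p \<in> B" using hk by simp
qed

lemma dir3:
  fixes s :: "'f::field \<Rightarrow> ('h::ab_group_add \<times> 'k::ab_group_add) \<Rightarrow> ('h \<times> 'k)"
  assumes m: "module s" and sA: "module.subspace s A" and sB: "module.subspace s B"
    and r: "lr_ran A = lr_ran B"
    and k: "lr_ker (module.span s (A \<union> B)) \<subseteq> lr_ker (A \<inter> B)"
  shows "A \<subseteq> B"
proof
  interpret P: module s by fact
  fix p assume p: "p \<in> A"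
  obtain h k where hk: "p = (h, k)" by force
  have "k \<in> lr_ran B" using p hk r by (auto simp: lr_ran_def)
  then obtain h' where h': "(h', k) \<in> B" by (auto simp: lr_ran_def)
  have "(h, k) - (h', k) \<in> P.span (A \<union> B)"
    using P.span_diff P.span_base p hk h' by (metis UnI1 UnI2)
  hence "h - h' \<in> lr_ker (P.span (A \<union> B))" by (simp add: lr_ker_def)
  hence "(h - h', 0) \<in> B" using k by (auto simp: lr_ker_def)
  hence "(h - h', 0) + (h', k) \<in> B" using P.subspace_add[OF sB, of "(h - h', 0)" "(h',k)"] h' by blast
  thus "p \<in> B" using hk by simp
qed

theorem corollary3p2:
  fixes sH :: "'f::field \<Rightarrow> 'h::ab_group_add \<Rightarrow> 'h"
    and sK :: "'f \<Rightarrow> 'k::ab_group_add \<Rightarrow> 'k"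
    and S T :: "('h \<times> 'k) set"
  assumes "vector_space sH" and "vector_space sK"
    and "linear_relation sH sK S" and "linear_relation sH sK T"
  shows "(S = T \<longleftrightarrow>
           lr_ker S = lr_ker T \<and> set_sum (lr_ran S) (lr_ran T) \<subseteq> lr_ran (S \<inter> T))
       \<and> (S = T \<longleftrightarrow>
           lr_ran S = lr_ran T \<and> lr_ker (lr_join sH sK S T) \<subseteq> lr_ker (S \<inter> T))"
proof -
  have m: "module (prod_scale sH sK)" using prod_module assms(1,2) .
  interpret P: module "prod_scale sH sK" by fact
  have sS: "P.subspace S" and sT: "P.subspace T"
    using assms(3,4) by (auto simp: linear_relation_def)
  have ss: "set_sum (lr_ran S) (lr_ran S) \<subseteq> lr_ran S"
  proof
    fix x assume "x \<in> set_sum (lr_ran S) (lr_ran S)"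
    then obtain a b h1 h2 where "x = a + b" "(h1, a) \<in> S" "(h2, b) \<in> S"
      by (auto simp: set_sum_def lr_ran_def)
    hence "(h1, a) + (h2, b) \<in> S" using P.subspace_add[OF sS] by blast
    thus "x \<in> lr_ran S" using \<open>x = a + b\<close> by (auto simp: lr_ran_def)
  qed
  have spT: "P.span T = T" using sT by simp
  have sw: "set_sum (lr_ran T) (lr_ran S) = set_sum (lr_ran S) (lr_ran T)"
    by (auto simp: set_sum_def) (metis add.commute)+
  have "S = T \<longleftrightarrow>
           lr_ker S = lr_ker T \<and> set_sum (lr_ran S) (lr_ran T) \<subseteq> lr_ran (S \<inter> T)"
    using ss dir2[OF m sS sT] dir2[OF m sT sS] sw by (auto simp: Int_commute)
  moreover have "S = T \<longleftrightarrow>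
           lr_ran S = lr_ran T \<and> lr_ker (lr_join sH sK S T) \<subseteq> lr_ker (S \<inter> T)"
    using dir3[OF m sS sT] spT dir3[OF m sT sS] P.span_eq_iff[of S] sS
    by (auto simp: lr_join_def Int_commute Un_commute spT)
  ultimately show ?thesis by blast
qed

end
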